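(* Let $\mu$ be a probability measure on $[0,\infty)$ with mean $1$ such that $\Lambda_\mu$ is finite on a neighborhood of $0$, and let $P$ be a probability measure on $(\Omega,\mathcal{M})$. Then $\mathcal{U}^\mu(P)$ contains every probability measure $Q$ with $Q\ll P$ such that $dQ/dP$ has distribution $\mu$ under $P$. Every such $Q$ satisfies $\Lambda_Q^{\log(dQ/dP)}(\lambda)=\Lambda_\mu(\lambda)$ for all $\lambda\ge0$ and $$R(Q\|P)=\frac{d}{d\lambda}\Big|_{\lambda=0}\Lambda_\mu(\lambda)=1+\int_0^\infty G_\mu(z)\log(z)\,dz.$$ More generally, for every $Q\in\mathcal{U}^\mu(P)$, $$R(Q\|P)\le\frac{d}{d\lambda}\Big|_{\lambda=0}\Lambda_\mu(\lambda)=1+\int_0^\infty G_\mu(z)\log(z)\,dz.$$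
   Context: $R(Q\|P)=\int\log(dQ/dP)\,dQ$ if $Q\ll P$, $+\infty$ otherwise. $\Lambda_Q^f(\lambda)=\log E_Q[e^{\lambda f}]$. For a probability measure $\mu$ on $[0,\infty)$ with mean $1$, define $G_\mu(r)=\mu([r,\infty))$ for $r\ge0$ and $\Lambda_\mu(\lambda)=\log\big((\lambda+1)\int_0^\infty G_\mu(z)z^\lambda\,dz\big)$ for $\lambda\ge0$ (so $\Lambda_\mu(0)=0$, $\Lambda_\mu\ge 0$). If $\Lambda_\mu$ is finite on a neighborhood of $0$, set $\mathcal{U}^\mu(P)=\{Q \text{ probability measure}: Q\ll P,\ \Lambda_Q^{\log(dQ/dP)}(\lambda)\le\Lambda_\mu(\lambda)\ \text{for all }\lambda>0\}$. *)

theory Defs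
  imports "HOL-Probability.Probability"
begin

definition dens :: "'a measure \<Rightarrow> 'a measure \<Rightarrow> 'a \<Rightarrow> real" where
  "dens P Q x = enn2real (RN_deriv P Q x)"

text \<open>Relative entropy R(Q||P), extended-real valued; +infinity unless Q << P.
  The negative part of log(dQ/dP) is always Q-integrable, so the difference is well defined.\<close>
definition relent :: "'a measure \<Rightarrow> 'a measure \<Rightarrow> ereal" where
  "relent Q P =
     (if absolutely_continuous P Q \<and> sets Q = sets P then
        enn2ereal (\<integral>\<^sup>+ x. ennreal (ln (dens P Q x)) \<partial>Q)
        - enn2ereal (\<integral>\<^sup>+ x. ennreal (- ln (dens P Q x)) \<partial>Q)
      else \<infinity>)"

definition LambdaQ :: "'a measure \<Rightarrow> ('a \<Rightarrow> real) \<Rightarrow> real \<Rightarrow> ereal" where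
  "LambdaQ Q f l =
     (let I = \<integral>\<^sup>+ x. ennreal (exp (l * f x)) \<partial>Q
      in if I = \<infinity> then \<infinity> else ereal (ln (enn2real I)))"

definition Gmu :: "real measure \<Rightarrow> real \<Rightarrow> real" where
  "Gmu \<mu> r = measure \<mu> {r..}"

definition Lambda_mu :: "real measure \<Rightarrow> real \<Rightarrow> ereal" where
  "Lambda_mu \<mu> l =
     (let I = \<integral>\<^sup>+ z. ennreal (indicator {0<..} z * Gmu \<mu> z * z powr l) \<partial>lborel
      in if I = \<infinity> then \<infinity> else ereal (ln ((l + 1) * enn2real I)))"

definition Umu :: "real measure \<Rightarrow> 'a measure \<Rightarrow> 'a measure set" where
  "Umu \<mu> P = {Q. prob_space Q \<and> sets Q = sets P \<and> absolutely_continuous P Q \<and>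
      (\<forall>l>0. LambdaQ Q (\<lambda>x. ln (dens P Q x)) l \<le> Lambda_mu \<mu> l)}"

end

theory Submission
  imports Defs
begin


lemma Gmu_meas:
  assumes "prob_space \<mu>" "sets \<mu> = sets borel"
  shows "Gmu \<mu> \<in> borel_measurable borel"
proof -
  interpret prob_space \<mu> by fact
  have "mono (\<lambda>z. - Gmu \<mu> z)"
  proof (intro monoI)
    fix x y :: real assume "x \<le> y"
    have "measure \<mu> {y..} \<le> measure \<mu> {x..}"
      using \<open>x \<le> y\<close> assms(2) by (intro finite_measure_mono) auto
    then show "- Gmu \<mu> x \<le> - Gmu \<mu> y" by (simp add: Gmu_def)
  qed
  then have "(\<lambda>z. - Gmu \<mu> z) \<in> borel_measurable borel" by (rule borel_measurable_mono)
  then have "(\<lambda>z. - (- Gmu \<mu> z)) \<in> borel_measurable borel" by (rule borel_measurable_uminus)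
  then show ?thesis by simp
qed

lemma Gmu_bounds:
  assumes "prob_space \<mu>" 
  shows "0 \<le> Gmu \<mu> z" "Gmu \<mu> z \<le> 1"
proof -
  interpret prob_space \<mu> by fact
  show "0 \<le> Gmu \<mu> z" unfolding Gmu_def by (rule measure_nonneg)
  show "Gmu \<mu> z \<le> 1" unfolding Gmu_def by (rule prob_le_1)
qed
lemma tonelli_meas:
  assumes mu: "sets \<mu> = sets borel" and [measurable]: "h \<in> borel_measurable borel"
  shows "(\<lambda>(z::real,x::real). ennreal (indicator {0<..} z * h z) * indicator {z..} x) \<in> borel_measurable (lborel \<Otimes>\<^sub>M \<mu>)"
proof -
  have e: "(\<lambda>(z::real,x::real). ennreal (indicator {0<..} z * h z) * indicator {z..} x) = (\<lambda>p. ennreal (indicator {0<..} (fst p) * h (fst p)) * (if fst p \<le> snd p then 1 else 0))"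
    by (auto simp: indicator_def fun_eq_iff)
  have m: "(\<lambda>p. ennreal (indicator {0<..} (fst p) * h (fst p)) * (if fst p \<le> snd p then 1 else 0)) \<in> borel_measurable (borel \<Otimes>\<^sub>M borel)"
    by measurable
  have eq: "borel_measurable (lborel \<Otimes>\<^sub>M \<mu>) = borel_measurable (borel \<Otimes>\<^sub>M borel)"
    by (intro measurable_cong_sets sets_pair_measure_cong) (auto simp: mu)
  show ?thesis unfolding e eq by (rule m)
qed
lemma tonelli_G:
  assumes mu: "prob_space \<mu>" "sets \<mu> = sets borel"
    and h: "h \<in> borel_measurable borel" "\<And>z. 0 \<le> h z"
  shows "(\<integral>\<^sup>+ z. ennreal (indicator {0<..} z * Gmu \<mu> z * h z) \<partial>lborel)
       = (\<integral>\<^sup>+ x. (\<integral>\<^sup>+ z. ennreal (indicator {0<..x} z * h z) \<partial>lborel) \<partial>\<mu>)"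
proof -
  interpret prob_space \<mu> by fact
  interpret pair_sigma_finite lborel \<mu> 
    by (simp add: lborel.sigma_finite_measure_axioms pair_sigma_finite_def sigma_finite_measure_axioms)
  have meas_mu[measurable]: "{z..} \<in> sets \<mu>" for z :: real using mu(2) by simp
  have "(\<integral>\<^sup>+ z. ennreal (indicator {0<..} z * Gmu \<mu> z * h z) \<partial>lborel)
      = (\<integral>\<^sup>+ z. (\<integral>\<^sup>+ x. ennreal (indicator {0<..} z * h z) * indicator {z..} x \<partial>\<mu>) \<partial>lborel)"
  proof (rule nn_integral_cong)
    fix z :: real
    have "ennreal (indicator {0<..} z * Gmu \<mu> z * h z) = ennreal (indicator {0<..} z * h z) * emeasure \<mu> {z..}"
      using h(2)[of z] Gmu_bounds[OF mu(1), of z]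
      by (simp add: Gmu_def emeasure_eq_measure ennreal_mult'' mult.commute mult.left_commute)
    also have "\<dots> = (\<integral>\<^sup>+ x. ennreal (indicator {0<..} z * h z) * indicator {z..} x \<partial>\<mu>)"
      by (simp add: nn_integral_cmult_indicator)
    finally show "ennreal (indicator {0<..} z * Gmu \<mu> z * h z) = \<dots>" .
  qed
  also have "\<dots> = (\<integral>\<^sup>+ x. (\<integral>\<^sup>+ z. ennreal (indicator {0<..} z * h z) * indicator {z..} x \<partial>lborel) \<partial>\<mu>)"
  proof -
    have [measurable]: "h \<in> borel_measurable borel" by (rule h)
    have m: "(\<lambda>(z,x). ennreal (indicator {0<..} z * h z) * indicator {z..} x) \<in> borel_measurable (lborel \<Otimes>\<^sub>M \<mu>)"
      by (rule tonelli_meas[OF mu(2) h(1)])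
    show ?thesis using Fubini'[OF m, symmetric] by simp
  qed
  also have "\<dots> = (\<integral>\<^sup>+ x. (\<integral>\<^sup>+ z. ennreal (indicator {0<..x} z * h z) \<partial>lborel) \<partial>\<mu>)"
    by (intro nn_integral_cong) (auto simp: indicator_def)
  finally show ?thesis .
qed



lemma powr_inner:
  assumes l: "l > -1" and x: "0 \<le> x"
  shows "(\<integral>\<^sup>+ z. ennreal (indicator {0<..x} z * z powr l) \<partial>lborel) = ennreal (x powr (l+1) / (l+1))"
proof -
  have "(\<integral>\<^sup>+ z. ennreal (indicator {0<..x} z * z powr l) \<partial>lborel) = (\<integral>\<^sup>+ z. ennreal (indicator {0..x} z * z powr l) \<partial>lborel)"
    by (intro nn_integral_cong) (auto simp: indicator_def)
  also have "\<dots> = ennreal (x powr (l+1) / (l+1))"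
    by (rule nn_integral_has_integral_lebesgue[OF _ has_integral_powr_from_0[OF l x]]) auto
  finally show ?thesis .
qed

definition Nmom :: "real measure \<Rightarrow> real \<Rightarrow> ennreal" where
  "Nmom \<mu> l = (\<integral>\<^sup>+ x. ennreal (x powr (l+1)) \<partial>\<mu>)"

lemma moment_J:
  assumes mu: "prob_space \<mu>" "sets \<mu> = sets borel" "AE x in \<mu>. 0 \<le> x" and l: "l > -1"
  shows "ennreal (l+1) * (\<integral>\<^sup>+ z. ennreal (indicator {0<..} z * Gmu \<mu> z * z powr l) \<partial>lborel) = Nmom \<mu> l"
proof -
  have "(\<integral>\<^sup>+ z. ennreal (indicator {0<..} z * Gmu \<mu> z * z powr l) \<partial>lborel)
      = (\<integral>\<^sup>+ x. (\<integral>\<^sup>+ z. ennreal (indicator {0<..x} z * z powr l) \<partial>lborel) \<partial>\<mu>)"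
    by (rule tonelli_G[OF mu(1,2)]) auto
  also have "\<dots> = (\<integral>\<^sup>+ x. ennreal (x powr (l+1) / (l+1)) \<partial>\<mu>)"
    using mu(3) by (intro nn_integral_cong_AE) (auto simp: powr_inner[OF l])
  finally have "ennreal (l+1) * (\<integral>\<^sup>+ z. ennreal (indicator {0<..} z * Gmu \<mu> z * z powr l) \<partial>lborel)
     = ennreal (l+1) * (\<integral>\<^sup>+ x. ennreal (x powr (l+1) / (l+1)) \<partial>\<mu>)" by simp
  also have "\<dots> = (\<integral>\<^sup>+ x. ennreal (l+1) * ennreal (x powr (l+1) / (l+1)) \<partial>\<mu>)"
    by (rule nn_integral_cmult[symmetric]) (use mu(2) in auto)
  also have "\<dots> = Nmom \<mu> l"
    unfolding Nmom_def using l by (intro nn_integral_cong) (simp add: ennreal_mult[symmetric])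
  finally show ?thesis .
qed

lemma Lambda_mu_eq:
  assumes mu: "prob_space \<mu>" "sets \<mu> = sets borel" "AE x in \<mu>. 0 \<le> x" and l: "l > -1"
  shows "Lambda_mu \<mu> l = (if Nmom \<mu> l = \<infinity> then \<infinity> else ereal (ln (enn2real (Nmom \<mu> l))))"
proof -
  define J where "J = (\<integral>\<^sup>+ z. ennreal (indicator {0<..} z * Gmu \<mu> z * z powr l) \<partial>lborel)"
  have NJ: "Nmom \<mu> l = ennreal (l+1) * J" using moment_J[OF mu l] by (simp add: J_def)
  have "J = \<infinity> \<longleftrightarrow> Nmom \<mu> l = \<infinity>" using l by (simp add: NJ ennreal_mult_eq_top_iff)
  moreover have "(l+1) * enn2real J = enn2real (Nmom \<mu> l)" using l by (simp add: NJ enn2real_mult)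
  ultimately show ?thesis unfolding Lambda_mu_def J_def[symmetric] Let_def by simp
qed


lemma dct_at_right0:
  fixes s :: "real \<Rightarrow> 'a \<Rightarrow> real" and w f :: "'a \<Rightarrow> real"
  assumes f: "f \<in> borel_measurable M" and s: "\<And>t. s t \<in> borel_measurable M" and w: "integrable M w"
    and lim: "AE x in M. ((\<lambda>t. s t x) \<longlongrightarrow> f x) (at_right 0)"
    and bnd: "\<forall>\<^sub>F t in at_right 0. AE x in M. norm (s t x) \<le> w x"
  shows "((\<lambda>t. integral\<^sup>L M (s t)) \<longlongrightarrow> integral\<^sup>L M f) (at_right 0)" "integrable M f"
proof -
  have lim': "AE x in M. ((\<lambda>t. s (inverse t) x) \<longlongrightarrow> f x) at_top"
    using lim by eventually_elim (simp add: filterlim_at_right_to_top)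
  have bnd': "\<forall>\<^sub>F t in at_top. AE x in M. norm (s (inverse t) x) \<le> w x"
    using bnd by (simp add: eventually_at_right_to_top)
  have "((\<lambda>t. integral\<^sup>L M (s (inverse t))) \<longlongrightarrow> integral\<^sup>L M f) at_top"
    by (rule integral_dominated_convergence_at_top[OF f s w lim' bnd'])
  then show "((\<lambda>t. integral\<^sup>L M (s t)) \<longlongrightarrow> integral\<^sup>L M f) (at_right 0)"
    by (simp add: filterlim_at_right_to_top)
  show "integrable M f"
    by (rule integrable_dominated_convergence_at_top[OF f s w lim' bnd'])
qed

lemma core_ineq:
  fixes a l \<delta> :: real
  assumes l: "0 < l" "l \<le> \<delta>"
  shows "\<bar>(exp (l*a) - 1) / l\<bar> \<le> (if a \<le> 0 then - a else exp (2*\<delta>*a) / \<delta>)"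
proof (cases "a \<le> 0")
  case True
  have u: "l*a \<le> 0" using True l by (simp add: mult_nonneg_nonpos)
  have e1: "exp (l*a) \<le> 1" using u by simp
  have e2: "1 + l*a \<le> exp (l*a)" by (rule exp_ge_add_one_self)
  have "\<bar>(exp (l*a) - 1) / l\<bar> = (1 - exp (l*a)) / l" using e1 l by (simp add: abs_div_pos)
  also have "\<dots> \<le> (- (l*a)) / l" using e2 l by (intro divide_right_mono) linarith+
  also have "\<dots> = - a" using l by simp
  finally show ?thesis using True by simp
next
  case False
  have d: "0 < \<delta>" using l by simp
  have u: "0 \<le> l*a" using False l by simp
  have e1: "1 \<le> exp (l*a)" using u by simp
  have e2: "1 - l*a \<le> exp (-(l*a))" using exp_ge_add_one_self[of "-(l*a)"] by simp
  have e3: "exp (l*a) - 1 \<le> l*a*exp (l*a)"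
  proof -
    have "exp (l*a) * (1 - l*a) \<le> exp (l*a) * exp (-(l*a))" using e2 by (intro mult_left_mono) auto
    then show ?thesis by (simp add: exp_minus algebra_simps)
  qed
  have "\<bar>(exp (l*a) - 1) / l\<bar> = (exp (l*a) - 1) / l" using e1 l by (simp add: abs_div_pos)
  also have "\<dots> \<le> (l*a*exp (l*a)) / l" using e3 l by (intro divide_right_mono) auto
  also have "\<dots> = a * exp (l*a)" using l by simp
  also have "\<dots> \<le> a * exp (\<delta>*a)" using False l by (intro mult_left_mono) auto
  also have "\<dots> \<le> (exp (\<delta>*a) / \<delta>) * exp (\<delta>*a)"
  proof (intro mult_right_mono)
    have "\<delta>*a \<le> exp (\<delta>*a)" using exp_ge_add_one_self[of "\<delta>*a"] by linarith
    then show "a \<le> exp (\<delta>*a) / \<delta>" using d by (simp add: field_simps)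
  qed auto
  also have "\<dots> = exp (2*\<delta>*a) / \<delta>" by (simp add: exp_add[symmetric] algebra_simps)
  finally show ?thesis using False by simp
qed

lemma ineq_x:
  fixes x l \<delta> :: real
  assumes x: "0 \<le> x" and l: "0 < l" "l \<le> \<delta>"
  shows "\<bar>(x powr (l+1) - x powr 1) / l\<bar> \<le> 1 + x powr (2*\<delta>+1) / \<delta>"
proof (cases "x = 0")
  case True
  then show ?thesis using l by simp
next
  case False
  then have xp: "0 < x" using x by simp
  define a where "a = ln x"
  have d: "0 < \<delta>" using l by simp
  have eq: "(x powr (l+1) - x powr 1) / l = x * ((exp (l*a) - 1) / l)"
    using xp by (simp add: powr_def a_def algebra_simps exp_add diff_divide_distrib)
  have "\<bar>(x powr (l+1) - x powr 1) / l\<bar> = x * \<bar>(exp (l*a) - 1) / l\<bar>"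
    unfolding eq using xp by (simp add: abs_mult)
  also have "\<dots> \<le> x * (if a \<le> 0 then - a else exp (2*\<delta>*a) / \<delta>)"
    using core_ineq[OF l, of a] xp by (intro mult_left_mono) auto
  also have "\<dots> \<le> 1 + x powr (2*\<delta>+1) / \<delta>"
  proof (cases "a \<le> 0")
    case True
    have "- ln x \<le> 1/x - 1" using ln_le_minus_one[of "1/x"] xp by (simp add: ln_div)
    then have "x * (- a) \<le> x * (1/x - 1)" using xp by (intro mult_left_mono) (auto simp: a_def)
    also have "\<dots> \<le> 1" using xp by (simp add: algebra_simps)
    finally show ?thesis using True d by (simp add: add_increasing2)
  next
    case False
    have "x * (exp (2*\<delta>*a) / \<delta>) = x powr (2*\<delta>+1) / \<delta>"
      using xp by (simp add: powr_def a_def exp_add algebra_simps)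
    moreover have "0 \<le> x powr (2*\<delta>+1) / \<delta>" using d by simp
    ultimately have "x * (exp (2*\<delta>*a) / \<delta>) \<le> 1 + x powr (2*\<delta>+1) / \<delta>" by linarith
    then show ?thesis using False by (simp only: if_False)
  qed
  finally show ?thesis .
qed

lemma ineq_z:
  fixes z l \<delta> :: real
  assumes z: "0 < z" and l: "0 < l" "l \<le> \<delta>"
  shows "\<bar>(z powr l - 1) / l\<bar> \<le> (if z \<le> 1 then 2 * z powr (-1/2) else z powr (2*\<delta>) / \<delta>)"
proof -
  define a where "a = ln z"
  have eq: "z powr l = exp (l*a)" using z by (simp add: powr_def a_def mult.commute)
  have "\<bar>(z powr l - 1) / l\<bar> \<le> (if a \<le> 0 then - a else exp (2*\<delta>*a) / \<delta>)"
    unfolding eq by (rule core_ineq[OF l])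
  also have "\<dots> \<le> (if z \<le> 1 then 2 * z powr (-1/2) else z powr (2*\<delta>) / \<delta>)"
  proof (cases "z \<le> 1")
    case True
    then have a0: "a \<le> 0" using z by (simp add: a_def)
    have "-a/2 \<le> exp (-a/2)" using exp_ge_add_one_self[of "-a/2"] by linarith
    then have "-a \<le> 2 * exp (-a/2)" by simp
    moreover have "z powr (-1/2) = exp (-a/2)" using z by (simp add: powr_def a_def)
    ultimately show ?thesis using True a0 by simp
  next
    case False
    then have "\<not> a \<le> 0" using z by (simp add: a_def)
    moreover have "z powr (2*\<delta>) = exp (2*\<delta>*a)" using z by (simp add: powr_def a_def mult.commute)
    ultimately show ?thesis using False by simp
  qed
  finally show ?thesis .
qed



lemma ev_small: "0 < (d::real) \<Longrightarrow> \<forall>\<^sub>F l in at_right 0. 0 < l \<and> l < d"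
  using eventually_at_right[of 0 d "\<lambda>l. 0 < l \<and> l < d"] by auto

locale mu_setup =
  fixes \<mu> :: "real measure" and \<epsilon> :: real
  assumes prob: "prob_space \<mu>" and sets_mu: "sets \<mu> = sets borel"
    and nonneg: "AE x in \<mu>. 0 \<le> x"
    and mean_int: "integrable \<mu> (\<lambda>x. x)" and mean: "(\<integral>x. x \<partial>\<mu>) = 1"
    and eps: "0 < \<epsilon>" and fin: "\<And>l. 0 \<le> l \<Longrightarrow> l < \<epsilon> \<Longrightarrow> Nmom \<mu> l \<noteq> \<infinity>"
begin

definition M :: "real \<Rightarrow> real" where "M l = (\<integral>x. x powr (l+1) \<partial>\<mu>)"

sublocale prob_space \<mu> by (rule prob)

lemma meas_mu: "measurable \<mu> = measurable borel"
  using sets_mu by (intro ext measurable_cong_sets) auto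

lemma powr_meas[measurable]: "(\<lambda>x. x powr p) \<in> borel_measurable \<mu>"
  unfolding meas_mu by measurable

lemma int_M: assumes "0 \<le> l" "l < \<epsilon>" shows "integrable \<mu> (\<lambda>x. x powr (l+1))"
proof -
  obtain r where "Nmom \<mu> l = ennreal r" using fin[OF assms] by (cases "Nmom \<mu> l") auto
  then show ?thesis unfolding Nmom_def
    by (intro integrableI_nn_integral_finite[where x=r]) auto
qed

lemma Nmom_M: assumes "0 \<le> l" "l < \<epsilon>" shows "Nmom \<mu> l = ennreal (M l)"
proof -
  have "M l = enn2real (Nmom \<mu> l)" unfolding M_def Nmom_def
    by (rule integral_eq_nn_integral) auto
  moreover have "Nmom \<mu> l \<noteq> \<infinity>" by (rule fin[OF assms])
  ultimately show ?thesis by (simp add: ennreal_enn2real_if)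
qed

lemma M_nonneg: "0 \<le> M l" unfolding M_def by (intro Bochner_Integration.integral_nonneg) simp

lemma M0: "M 0 = 1"
proof -
  have "M 0 = (\<integral>x. x \<partial>\<mu>)" unfolding M_def
    using nonneg by (intro integral_cong_AE) (auto simp: meas_mu)
  then show ?thesis using mean by simp
qed

lemma Lambda_M: assumes "0 \<le> l" "l < \<epsilon>" shows "Lambda_mu \<mu> l = ereal (ln (M l))"
  using Lambda_mu_eq[OF prob sets_mu nonneg, of l] assms Nmom_M[OF assms] M_nonneg by simp

lemma deriv_M:
  shows "integrable \<mu> (\<lambda>x. x * ln x)"
    and "((\<lambda>l. (M l - M 0) / l) \<longlongrightarrow> (\<integral>x. x * ln x \<partial>\<mu>)) (at_right 0)"
proof -
  define \<delta> where "\<delta> = \<epsilon> / 3"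
  have d: "0 < \<delta>" "2*\<delta> < \<epsilon>" using eps by (auto simp: \<delta>_def)
  define s where "s l x = (x powr (l+1) - x powr (0+1)) / l" for l x :: real
  define w where "w x = 1 + x powr (2*\<delta>+1) / \<delta>" for x :: real
  have w: "integrable \<mu> w" unfolding w_def
    using int_M[of "2*\<delta>"] d by auto
  have lim: "AE x in \<mu>. ((\<lambda>l. s l x) \<longlongrightarrow> x * ln x) (at_right 0)"
    using nonneg
  proof eventually_elim
    fix x :: real assume x: "0 \<le> x"
    show "((\<lambda>l. s l x) \<longlongrightarrow> x * ln x) (at_right 0)"
    proof (cases "x = 0")
      case True then show ?thesis by (simp add: s_def)
    next
      case False
      then have xp: "0 < x" using x by simp
      have "((\<lambda>l. exp ((l+1) * ln x)) has_real_derivative exp ((0+1) * ln x) * ln x) (at 0 within {0<..})"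
        by (auto intro!: derivative_eq_intros)
      then have "((\<lambda>l. (exp ((l+1) * ln x) - exp ((0+1) * ln x)) / (l - 0)) \<longlongrightarrow> exp ((0+1) * ln x) * ln x) (at_right 0)"
        by (simp add: has_field_derivative_iff)
      then show ?thesis using xp by (simp add: s_def powr_def)
    qed
  qed
  have bnd: "\<forall>\<^sub>F l in at_right 0. AE x in \<mu>. norm (s l x) \<le> w x"
  proof -
    show ?thesis using ev_small[OF d(1)]
    proof eventually_elim
      case (elim l)
      show ?case using nonneg
        by eventually_elim (use ineq_x[of _ l \<delta>] elim in \<open>auto simp: s_def w_def\<close>)
    qed
  qed
  have f: "(\<lambda>x. x * ln x) \<in> borel_measurable \<mu>" unfolding meas_mu by measurable
  have s: "\<And>l. s l \<in> borel_measurable \<mu>" unfolding s_def meas_mu by measurable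
  note D = dct_at_right0[OF f s w lim bnd]
  show "integrable \<mu> (\<lambda>x. x * ln x)" by (rule D(2))
  have "\<forall>\<^sub>F l in at_right 0. integral\<^sup>L \<mu> (s l) = (M l - M 0) / l"
  proof -
    show ?thesis using ev_small[OF eps]
    proof eventually_elim
      case (elim l)
      show ?case unfolding s_def M_def
        using int_M[of l] int_M[of 0] elim eps by (simp add: integral_diff)
    qed
  qed
  then show "((\<lambda>l. (M l - M 0) / l) \<longlongrightarrow> (\<integral>x. x * ln x \<partial>\<mu>)) (at_right 0)"
    using D(1) by (rule Lim_transform_eventually[rotated])
qed

lemma Lambda_deriv:
  "((\<lambda>l. real_of_ereal (Lambda_mu \<mu> l)) has_real_derivative (\<integral>x. x * ln x \<partial>\<mu>)) (at 0 within {0..})"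
proof -
  have "(M has_real_derivative (\<integral>x. x * ln x \<partial>\<mu>)) (at 0 within {0..})"
    using deriv_M(2) by (simp add: has_field_derivative_iff at_within_Ici_at_right)
  from DERIV_chain2[OF DERIV_ln[of "M 0"] this]
  have "((\<lambda>l. ln (M l)) has_real_derivative (\<integral>x. x * ln x \<partial>\<mu>)) (at 0 within {0..})"
    by (simp add: M0)
  then show ?thesis
  proof (rule has_field_derivative_transform_within[OF _ eps])
    fix l :: real assume "l \<in> {0..}" "dist l 0 < \<epsilon>"
    then show "ln (M l) = real_of_ereal (Lambda_mu \<mu> l)" using Lambda_M[of l] by (simp add: dist_real_def)
  qed simp
qed

lemma Gmu_meas_loc[measurable]: "Gmu \<mu> \<in> borel_measurable borel"
  by (rule Gmu_meas[OF prob sets_mu])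

lemma J_int:
  assumes "0 \<le> l" "l < \<epsilon>"
  shows "integrable lborel (\<lambda>z. indicator {0<..} z * Gmu \<mu> z * z powr l)"
    and "(\<integral>z. indicator {0<..} z * Gmu \<mu> z * z powr l \<partial>lborel) = M l / (l+1)"
proof -
  define J where "J = (\<integral>\<^sup>+ z. ennreal (indicator {0<..} z * Gmu \<mu> z * z powr l) \<partial>lborel)"
  have lp: "l > -1" using assms by simp
  have "ennreal (l+1) * J = ennreal (M l)"
    using moment_J[OF prob sets_mu nonneg lp] Nmom_M[OF assms] by (simp add: J_def)
  then have "ennreal (1/(l+1)) * (ennreal (l+1) * J) = ennreal (1/(l+1)) * ennreal (M l)" by simp
  then have JJ: "J = ennreal (M l / (l+1))"
    using lp M_nonneg[of l] by (simp add: ennreal_mult[symmetric] mult.assoc[symmetric])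
  have nn: "\<And>z. 0 \<le> indicator {0<..} z * Gmu \<mu> z * z powr l"
    using Gmu_bounds[OF prob] by simp
  show "integrable lborel (\<lambda>z. indicator {0<..} z * Gmu \<mu> z * z powr l)"
    by (rule integrableI_nn_integral_finite[where x="M l / (l+1)"]) (use nn JJ in \<open>auto simp: J_def\<close>)
  have "(\<integral>z. indicator {0<..} z * Gmu \<mu> z * z powr l \<partial>lborel) = enn2real J"
    unfolding J_def by (rule integral_eq_nn_integral) (use nn in auto)
  then show "(\<integral>z. indicator {0<..} z * Gmu \<mu> z * z powr l \<partial>lborel) = M l / (l+1)"
    using JJ lp M_nonneg[of l] by simp
qed

lemma G_ln:
  shows "set_integrable lborel {0<..} (\<lambda>z. Gmu \<mu> z * ln z)"
    and "(LINT z:{0<..}|lborel. Gmu \<mu> z * ln z) = (\<integral>x. x * ln x \<partial>\<mu>) - 1"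
proof -
  define K where "K = (\<integral>x. x * ln x \<partial>\<mu>)"
  define \<delta> where "\<delta> = \<epsilon> / 3"
  have d: "0 < \<delta>" "2*\<delta> < \<epsilon>" using eps by (auto simp: \<delta>_def)
  define s where "s l z = indicator {0<..} z * Gmu \<mu> z * ((z powr l - z powr 0) / l)" for l z :: real
  define f where "f z = indicator {0<..} z * (Gmu \<mu> z * ln z)" for z :: real
  define w where "w z = 2 * (indicator {0..1} z * z powr (-1/2)) + (indicator {0<..} z * Gmu \<mu> z * z powr (2*\<delta>)) / \<delta>" for z :: real
  have w1: "integrable lborel (\<lambda>z. indicator {0..1} z * z powr (-1/2::real))"
  proof -
    have "(\<integral>\<^sup>+ z. ennreal (indicator {0..1} z * z powr (-1/2)) \<partial>lborel) = ennreal (1 powr (-1/2+1) / (-1/2+1))"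
      by (rule nn_integral_has_integral_lebesgue[OF _ has_integral_powr_from_0]) auto
    then show ?thesis
      by (intro integrableI_nn_integral_finite[where x="1 powr (-1/2+1) / (-1/2+1)"]) auto
  qed
  have w: "integrable lborel w" unfolding w_def
    using w1 J_int(1)[of "2*\<delta>"] d by auto
  have lim: "AE z in lborel. ((\<lambda>l. s l z) \<longlongrightarrow> f z) (at_right 0)"
  proof (rule AE_I2)
    fix z :: real
    show "((\<lambda>l. s l z) \<longlongrightarrow> f z) (at_right 0)"
    proof (cases "0 < z")
      case False then show ?thesis by (simp add: s_def f_def)
    next
      case True
      have "((\<lambda>l. exp (l * ln z)) has_real_derivative exp (0 * ln z) * ln z) (at 0 within {0<..})"
        by (auto intro!: derivative_eq_intros)
      then have "((\<lambda>l. (exp (l * ln z) - exp (0 * ln z)) / (l - 0)) \<longlongrightarrow> exp (0 * ln z) * ln z) (at_right 0)"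
        by (simp add: has_field_derivative_iff)
      then have "((\<lambda>l. (z powr l - z powr 0) / l) \<longlongrightarrow> ln z) (at_right 0)"
        using True by (simp add: powr_def)
      then have "((\<lambda>l. Gmu \<mu> z * ((z powr l - z powr 0) / l)) \<longlongrightarrow> Gmu \<mu> z * ln z) (at_right 0)"
        by (rule tendsto_mult_left)
      then show ?thesis using True unfolding s_def f_def by simp
    qed
  qed
  have bnd: "\<forall>\<^sub>F l in at_right 0. AE z in lborel. norm (s l z) \<le> w z"
    using ev_small[OF d(1)]
  proof eventually_elim
    case (elim l)
    show ?case
    proof (rule AE_I2)
      fix z :: real
      have G: "0 \<le> Gmu \<mu> z" "Gmu \<mu> z \<le> 1" using Gmu_bounds[OF prob] by auto
      have w0: "0 \<le> 2 * (indicator {0..1} z * z powr (-1/2::real))" "0 \<le> (indicator {0<..} z * Gmu \<mu> z * z powr (2*\<delta>)) / \<delta>"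
        using G d by auto
      show "norm (s l z) \<le> w z"
      proof (cases "0 < z")
        case False then show ?thesis using w0 by (simp add: s_def w_def)
      next
        case True
        have b: "\<bar>(z powr l - 1) / l\<bar> \<le> (if z \<le> 1 then 2 * z powr (-1/2) else z powr (2*\<delta>) / \<delta>)"
          using ineq_z[OF True, of l \<delta>] elim by auto
        have "norm (s l z) = Gmu \<mu> z * \<bar>(z powr l - 1) / l\<bar>"
          using True G by (simp add: s_def abs_mult)
        also have "\<dots> \<le> Gmu \<mu> z * (if z \<le> 1 then 2 * z powr (-1/2) else z powr (2*\<delta>) / \<delta>)"
          using b G by (intro mult_left_mono) auto
        also have "\<dots> \<le> w z"
        proof (cases "z \<le> 1")
          case True
          have "Gmu \<mu> z * (2 * z powr (-1/2)) \<le> 1 * (2 * z powr (-1/2::real))"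
            using G by (intro mult_right_mono) auto
          moreover have e: "w z = 2 * z powr (-1/2::real) + (Gmu \<mu> z * z powr (2*\<delta>)) / \<delta>"
            using True \<open>0 < z\<close> by (simp add: w_def)
          moreover have p: "0 \<le> (Gmu \<mu> z * z powr (2*\<delta>)) / \<delta>" using G d by simp
          ultimately show ?thesis using True by (simp only: if_True)
        next
          case False
          then show ?thesis using \<open>0 < z\<close> w0 by (simp add: w_def)
        qed
        finally show ?thesis .
      qed
    qed
  qed
  have fm: "f \<in> borel_measurable lborel" unfolding f_def by measurable
  have sm: "\<And>l. s l \<in> borel_measurable lborel" unfolding s_def by measurable
  note D = dct_at_right0[OF fm sm w lim bnd]
  have ev: "\<forall>\<^sub>F l in at_right 0. integral\<^sup>L lborel (s l) = ((M l - M 0) / l - M 0) / (l + 1)"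
    using ev_small[OF eps]
  proof eventually_elim
    case (elim l)
    have "integral\<^sup>L lborel (s l) = (\<integral>z. (indicator {0<..} z * Gmu \<mu> z * z powr l - indicator {0<..} z * Gmu \<mu> z * z powr 0) / l \<partial>lborel)"
      unfolding s_def by (simp add: algebra_simps diff_divide_distrib)
    also have "\<dots> = (M l / (l+1) - M 0 / (0+1)) / l"
      using J_int[of l] J_int[of 0] elim eps by (simp add: integral_diff)
    also have "\<dots> = ((M l - M 0) / l - M 0) / (l + 1)"
      using elim by (simp add: field_simps)
    finally show ?case .
  qed
  have "((\<lambda>l. ((M l - M 0) / l - M 0) / (l + 1)) \<longlongrightarrow> (K - M 0) / (0 + 1)) (at_right 0)"
    unfolding K_def by (intro tendsto_intros deriv_M(2)) auto
  then have "((\<lambda>l. ((M l - M 0) / l - M 0) / (l + 1)) \<longlongrightarrow> K - 1) (at_right 0)"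
    by (simp add: M0)
  then have "((\<lambda>l. integral\<^sup>L lborel (s l)) \<longlongrightarrow> K - 1) (at_right 0)"
  proof (rule Lim_transform_eventually)
    show "\<forall>\<^sub>F l in at_right 0. ((M l - M 0) / l - M 0) / (l + 1) = integral\<^sup>L lborel (s l)"
      using ev by (auto elim: eventually_mono)
  qed
  then have "integral\<^sup>L lborel f = K - 1"
    using D(1) by (intro tendsto_unique[OF _ D(1)]) auto
  then show "(LINT z:{0<..}|lborel. Gmu \<mu> z * ln z) = (\<integral>x. x * ln x \<partial>\<mu>) - 1"
    unfolding K_def f_def set_lebesgue_integral_def by simp
  show "set_integrable lborel {0<..} (\<lambda>z. Gmu \<mu> z * ln z)"
    using D(2) unfolding f_def set_integrable_def by simp
qed

end


lemma dens_meas[measurable]: "dens P Q \<in> borel_measurable P"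
  unfolding dens_def by measurable

lemma Q_transferP:
  assumes P: "prob_space P" and Q: "prob_space Q" "sets Q = sets P" "absolutely_continuous P Q"
    and phi: "\<phi> \<in> borel_measurable borel"
  shows "(\<integral>\<^sup>+ y. ennreal (\<phi> (dens P Q y)) \<partial>Q) = (\<integral>\<^sup>+ y. ennreal (dens P Q y * \<phi> (dens P Q y)) \<partial>P)"
proof -
  interpret P: prob_space P by fact
  have [measurable]: "\<phi> \<in> borel_measurable borel" by fact
  have dQ: "density P (RN_deriv P Q) = Q" by (rule P.density_RN_deriv[OF Q(3) Q(2)])
  have fin: "AE y in P. RN_deriv P Q y \<noteq> \<infinity>"
    by (rule P.RN_deriv_finite[OF _ Q(3) Q(2)]) (use Q(1) prob_space_imp_sigma_finite in auto)
  have "(\<integral>\<^sup>+ y. ennreal (\<phi> (dens P Q y)) \<partial>Q) = (\<integral>\<^sup>+ y. ennreal (\<phi> (dens P Q y)) \<partial>density P (RN_deriv P Q))"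
    by (simp only: dQ)
  also have "\<dots> = (\<integral>\<^sup>+ y. RN_deriv P Q y * ennreal (\<phi> (dens P Q y)) \<partial>P)"
    by (rule nn_integral_density) auto
  also have "\<dots> = (\<integral>\<^sup>+ y. ennreal (dens P Q y * \<phi> (dens P Q y)) \<partial>P)"
    using fin
  proof (intro nn_integral_cong_AE, eventually_elim)
    case (elim y)
    then have "RN_deriv P Q y = ennreal (dens P Q y)"
      unfolding dens_def by (simp add: ennreal_enn2real_if)
    then show ?case by (simp add: ennreal_mult' dens_def)
  qed
  finally show ?thesis .
qed

lemma Q_transfer:
  assumes P: "prob_space P" and Q: "prob_space Q" "sets Q = sets P" "absolutely_continuous P Q"
    and phi: "\<phi> \<in> borel_measurable borel"
  shows "(\<integral>\<^sup>+ y. ennreal (\<phi> (dens P Q y)) \<partial>Q) = (\<integral>\<^sup>+ x. ennreal (x * \<phi> x) \<partial>distr P borel (dens P Q))"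
proof -
  have [measurable]: "\<phi> \<in> borel_measurable borel" by fact
  show ?thesis unfolding Q_transferP[OF assms]
    by (rule nn_integral_distr[symmetric]) auto
qed

lemma x_exp_powr: "0 \<le> (x::real) \<Longrightarrow> x * exp (l * ln x) = x powr (l+1)"
  by (cases "x = 0") (auto simp: powr_def algebra_simps exp_add)

lemma LambdaQ_Nmom:
  assumes P: "prob_space P" and Q: "prob_space Q" "sets Q = sets P" "absolutely_continuous P Q"
    and nonneg: "AE x in distr P borel (dens P Q). 0 \<le> x"
  shows "LambdaQ Q (\<lambda>x. ln (dens P Q x)) l =
     (if Nmom (distr P borel (dens P Q)) l = \<infinity> then \<infinity> else ereal (ln (enn2real (Nmom (distr P borel (dens P Q)) l))))"
proof -
  have "(\<integral>\<^sup>+ x. ennreal (exp (l * ln (dens P Q x))) \<partial>Q) = (\<integral>\<^sup>+ x. ennreal (x * exp (l * ln x)) \<partial>distr P borel (dens P Q))"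
    by (rule Q_transfer[OF assms(1-4), of "\<lambda>x. exp (l * ln x)"]) measurable
  also have "\<dots> = Nmom (distr P borel (dens P Q)) l"
    unfolding Nmom_def using nonneg by (intro nn_integral_cong_AE) (auto simp: x_exp_powr)
  finally show ?thesis unfolding LambdaQ_def Let_def by simp
qed



lemma dlog_le1: "0 \<le> (d::real) \<Longrightarrow> d * - ln d \<le> 1"
proof (cases "d = 0")
  case False
  assume d: "0 \<le> d"
  then have dp: "0 < d" using False by simp
  have "- ln d \<le> 1/d - 1" using ln_le_minus_one[of "1/d"] dp by (simp add: ln_div)
  then have "d * - ln d \<le> d * (1/d - 1)" using dp by (intro mult_left_mono) auto
  also have "\<dots> \<le> 1" using dp by (simp add: algebra_simps)
  finally show ?thesis .
qed simp

theorem mainTheorem4: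
  fixes \<mu> :: "real measure" and P :: "'a measure"
  assumes mu_prob: "prob_space \<mu>"
    and mu_sets: "sets \<mu> = sets borel"
    and mu_nonneg: "AE x in \<mu>. 0 \<le> x"
    and mu_mean: "integrable \<mu> (\<lambda>x. x)" "(\<integral>x. x \<partial>\<mu>) = 1"
    and mu_finite: "\<exists>\<epsilon>>0. \<forall>l\<in>{0..<\<epsilon>}. Lambda_mu \<mu> l < \<infinity>"
    and P_prob: "prob_space P"
  shows
    "set_integrable lborel {0<..} (\<lambda>z. Gmu \<mu> z * ln z)
     \<and> ((\<lambda>l. real_of_ereal (Lambda_mu \<mu> l)) has_real_derivative
          (1 + (LINT z:{0<..}|lborel. Gmu \<mu> z * ln z))) (at 0 within {0..})
     \<and> (\<forall>Q. prob_space Q \<and> sets Q = sets P \<and> absolutely_continuous P Q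
            \<and> distr P borel (dens P Q) = \<mu> \<longrightarrow>
              Q \<in> Umu \<mu> P
              \<and> (\<forall>l\<ge>0. LambdaQ Q (\<lambda>x. ln (dens P Q x)) l = Lambda_mu \<mu> l)
              \<and> relent Q P = ereal (1 + (LINT z:{0<..}|lborel. Gmu \<mu> z * ln z)))
     \<and> (\<forall>Q\<in>Umu \<mu> P. relent Q P \<le> ereal (1 + (LINT z:{0<..}|lborel. Gmu \<mu> z * ln z)))"
proof -
  obtain \<epsilon> where eps: "\<epsilon> > 0" and fL: "\<And>l. l\<in>{0..<\<epsilon>} \<Longrightarrow> Lambda_mu \<mu> l < \<infinity>"
    using mu_finite by blast
  have fN: "Nmom \<mu> l \<noteq> \<infinity>" if "0 \<le> l" "l < \<epsilon>" for l
    using fL[of l] that Lambda_mu_eq[OF mu_prob mu_sets mu_nonneg, of l] by (auto split: if_splits)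
  interpret mu_setup \<mu> \<epsilon>
  proof (rule mu_setup.intro)
    show "\<And>l. 0 \<le> l \<Longrightarrow> l < \<epsilon> \<Longrightarrow> Nmom \<mu> l \<noteq> \<infinity>" by (rule fN)
  qed (fact mu_prob mu_sets mu_nonneg mu_mean(1) mu_mean(2) eps)+
  define K where "K = (\<integral>x. x * ln x \<partial>\<mu>)"
  have K: "1 + (LINT z:{0<..}|lborel. Gmu \<mu> z * ln z) = K" using G_ln(2) by (simp add: K_def)
  have part1: "set_integrable lborel {0<..} (\<lambda>z. Gmu \<mu> z * ln z)" by (rule G_ln(1))
  have part2: "((\<lambda>l. real_of_ereal (Lambda_mu \<mu> l)) has_real_derivative K) (at 0 within {0..})"
    unfolding K_def by (rule Lambda_deriv)
  have part3: "Q \<in> Umu \<mu> P \<and> (\<forall>l\<ge>0. LambdaQ Q (\<lambda>x. ln (dens P Q x)) l = Lambda_mu \<mu> l)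
              \<and> relent Q P = ereal K"
    if Q: "prob_space Q" "sets Q = sets P" "absolutely_continuous P Q" and dist: "distr P borel (dens P Q) = \<mu>" for Q
  proof -
    have LQ: "LambdaQ Q (\<lambda>x. ln (dens P Q x)) l = Lambda_mu \<mu> l" if "l \<ge> 0" for l
    proof -
      have AE: "AE x in distr P borel (dens P Q). 0 \<le> x" unfolding dist by (rule mu_nonneg)
      show ?thesis
        using LambdaQ_Nmom[OF P_prob Q AE, of l, unfolded dist] Lambda_mu_eq[OF mu_prob mu_sets mu_nonneg, of l] that
        by simp
    qed
    have "Q \<in> Umu \<mu> P" unfolding Umu_def using Q LQ by auto
    moreover
    obtain r q where rq: "0 \<le> r" "0 \<le> q" "(\<integral>\<^sup>+x. ennreal (x * ln x) \<partial>\<mu>) = ennreal r"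
      "(\<integral>\<^sup>+x. ennreal (- (x * ln x)) \<partial>\<mu>) = ennreal q" "(\<lambda>x. x * ln x) \<in> borel_measurable \<mu>" "K = r - q"
      unfolding K_def by (rule integrableE[OF deriv_M(1)])
    have pos: "(\<integral>\<^sup>+ x. ennreal (ln (dens P Q x)) \<partial>Q) = ennreal r"
      using Q_transfer[OF P_prob Q, of ln] rq(3) by (simp add: dist)
    have neg: "(\<integral>\<^sup>+ x. ennreal (- ln (dens P Q x)) \<partial>Q) = ennreal q"
      using Q_transfer[OF P_prob Q, of "\<lambda>x. - ln x"] rq(4) by (simp add: dist)
    have "relent Q P = ereal K"
      unfolding relent_def using Q pos neg rq by simp
    ultimately show ?thesis using LQ by auto
  qed
  have part4: "relent Q P \<le> ereal K" if QU: "Q \<in> Umu \<mu> P" for Q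
  proof -
    have Q: "prob_space Q" "sets Q = sets P" "absolutely_continuous P Q"
      and LQ: "\<And>l. l > 0 \<Longrightarrow> LambdaQ Q (\<lambda>x. ln (dens P Q x)) l \<le> Lambda_mu \<mu> l"
      using QU unfolding Umu_def by auto
    interpret Qp: prob_space Q by (rule Q(1))
    define f where "f y = ln (dens P Q y)" for y
    have measQ: "measurable Q = measurable P" using Q(2) by (intro ext measurable_cong_sets) auto
    have fm[measurable]: "f \<in> borel_measurable Q" unfolding f_def measQ by measurable
    have negP: "(\<integral>\<^sup>+ y. ennreal (- f y) \<partial>Q) = (\<integral>\<^sup>+ y. ennreal (dens P Q y * - ln (dens P Q y)) \<partial>P)"
      unfolding f_def using Q_transferP[OF P_prob Q, of "\<lambda>x. - ln x"] by simp
    also have "\<dots> \<le> (\<integral>\<^sup>+ y. 1 \<partial>P)"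
    proof (intro nn_integral_mono)
      fix y
      have "dens P Q y * - ln (dens P Q y) \<le> 1" by (rule dlog_le1) (simp add: dens_def)
      then have "ennreal (dens P Q y * - ln (dens P Q y)) \<le> ennreal 1" by (rule ennreal_leI)
      then show "ennreal (dens P Q y * - ln (dens P Q y)) \<le> 1" by simp
    qed
    also have "\<dots> = 1" using prob_space.emeasure_space_1[OF P_prob] by simp
    finally have negfin: "(\<integral>\<^sup>+ y. ennreal (- f y) \<partial>Q) \<noteq> \<infinity>" by (auto simp: top_unique)
    define l0 where "l0 = \<epsilon> / 2"
    have l0: "0 < l0" "l0 < \<epsilon>" using eps by (auto simp: l0_def)
    have posfin: "(\<integral>\<^sup>+ y. ennreal (f y) \<partial>Q) \<noteq> \<infinity>"
    proof
      assume inf: "(\<integral>\<^sup>+ y. ennreal (f y) \<partial>Q) = \<infinity>"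
      have "ennreal l0 * (\<integral>\<^sup>+ y. ennreal (f y) \<partial>Q) = (\<integral>\<^sup>+ y. ennreal l0 * ennreal (f y) \<partial>Q)"
        by (rule nn_integral_cmult[symmetric]) auto
      also have "\<dots> \<le> (\<integral>\<^sup>+ y. ennreal (exp (l0 * f y)) \<partial>Q)"
      proof (intro nn_integral_mono)
        fix y
        have "l0 * f y \<le> exp (l0 * f y)" using exp_ge_add_one_self[of "l0 * f y"] by linarith
        then show "ennreal l0 * ennreal (f y) \<le> ennreal (exp (l0 * f y))"
        proof -
          have "ennreal l0 * ennreal (f y) = ennreal (l0 * f y)" using l0 by (simp add: ennreal_mult')
          also have "\<dots> \<le> ennreal (exp (l0 * f y))" by (rule ennreal_leI) fact
          finally show ?thesis .
        qed
      qed
      finally have "(\<integral>\<^sup>+ y. ennreal (exp (l0 * f y)) \<partial>Q) = \<infinity>"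
        using inf l0 by (simp add: ennreal_mult_eq_top_iff top_unique)
      then have "LambdaQ Q (\<lambda>x. ln (dens P Q x)) l0 = \<infinity>"
        unfolding LambdaQ_def f_def by simp
      with LQ[OF l0(1)] Lambda_M[of l0] l0 show False by simp
    qed
    have fint: "integrable Q f" using fm posfin negfin by (simp add: real_integrable_def)
    define c where "c = (\<integral>y. f y \<partial>Q)"
    have relc: "relent Q P = ereal c"
    proof -
      obtain r q where rq: "0 \<le> r" "0 \<le> q" "(\<integral>\<^sup>+x. ennreal (f x) \<partial>Q) = ennreal r"
        "(\<integral>\<^sup>+x. ennreal (- f x) \<partial>Q) = ennreal q" "f \<in> borel_measurable Q" "c = r - q"
        unfolding c_def by (rule integrableE[OF fint])
      then show ?thesis unfolding relent_def using Q by (simp add: f_def)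
    qed
    have bound: "c * l \<le> real_of_ereal (Lambda_mu \<mu> l)" if l: "0 < l" "l < \<epsilon>" for l
    proof -
      define I where "I = (\<integral>\<^sup>+ y. ennreal (exp (l * f y)) \<partial>Q)"
      have LM: "Lambda_mu \<mu> l = ereal (ln (M l))" using Lambda_M[of l] l by simp
      have LQl: "LambdaQ Q (\<lambda>x. ln (dens P Q x)) l = (if I = \<infinity> then \<infinity> else ereal (ln (enn2real I)))"
        unfolding LambdaQ_def I_def f_def Let_def ..
      have Ifin: "I \<noteq> \<infinity>" using LQ[OF l(1)] LQl LM by auto
      have lnle: "ln (enn2real I) \<le> ln (M l)" using LQ[OF l(1)] LQl LM Ifin by simp
      have eint: "integrable Q (\<lambda>y. exp (l * f y))"
        using Ifin unfolding I_def
        by (intro integrableI_nn_integral_finite[where x="enn2real I"]) (auto simp: I_def ennreal_enn2real_if)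
      have eI: "(\<integral>y. exp (l * f y) \<partial>Q) = enn2real I"
        unfolding I_def by (rule integral_eq_nn_integral) auto
      have lin_int: "integrable Q (\<lambda>y. exp (l*c) * (1 + l * (f y - c)))"
        using fint by (auto simp: algebra_simps)
      have "(\<integral>y. exp (l*c) * (1 + l * (f y - c)) \<partial>Q) \<le> (\<integral>y. exp (l * f y) \<partial>Q)"
      proof (rule integral_mono[OF lin_int eint])
        fix y
        have "1 + l * (f y - c) \<le> exp (l * (f y - c))" by (rule exp_ge_add_one_self)
        then have "exp (l*c) * (1 + l * (f y - c)) \<le> exp (l*c) * exp (l * (f y - c))"
          by (intro mult_left_mono) auto
        also have "\<dots> = exp (l * f y)" by (simp add: exp_add[symmetric] algebra_simps)
        finally show "exp (l*c) * (1 + l * (f y - c)) \<le> exp (l * f y)" .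
      qed
      moreover have "(\<integral>y. exp (l*c) * (1 + l * (f y - c)) \<partial>Q) = exp (l*c)"
      proof -
        have "(\<integral>y. exp (l*c) * (1 + l * (f y - c)) \<partial>Q) = (\<integral>y. (exp (l*c) - exp (l*c) * l * c) + (exp (l*c) * l) * f y \<partial>Q)"
          by (intro Bochner_Integration.integral_cong) (auto simp: algebra_simps)
        also have "\<dots> = (exp (l*c) - exp (l*c) * l * c) + (exp (l*c) * l) * c"
          using fint unfolding c_def by (simp add: Qp.prob_space)
        finally show ?thesis by simp
      qed
      ultimately have "exp (l*c) \<le> enn2real I" using eI by simp
      then have "l * c \<le> ln (enn2real I)"
        by (metis exp_gt_zero ln_exp ln_le_cancel_iff order_less_le_trans)
      then show ?thesis using lnle LM by (simp add: mult.commute)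
    qed
    have lim: "((\<lambda>l. real_of_ereal (Lambda_mu \<mu> l) / l) \<longlongrightarrow> K) (at_right 0)"
    proof -
      have "((\<lambda>l. (real_of_ereal (Lambda_mu \<mu> l) - real_of_ereal (Lambda_mu \<mu> 0)) / (l - 0)) \<longlongrightarrow> K) (at 0 within {0..})"
        using part2 by (simp add: has_field_derivative_iff)
      moreover have "real_of_ereal (Lambda_mu \<mu> 0) = 0" using Lambda_M[of 0] eps M0 by simp
      ultimately show ?thesis by (simp add: at_within_Ici_at_right)
    qed
    have "c \<le> K"
    proof (rule tendsto_lowerbound[OF lim])
      show "\<forall>\<^sub>F l in at_right 0. c \<le> real_of_ereal (Lambda_mu \<mu> l) / l"
        using ev_small[OF eps]
        by eventually_elim (use bound in \<open>auto simp: field_simps\<close>)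
    qed simp
    then show ?thesis using relc by simp
  qed
  show ?thesis unfolding K using part1 part2 part3 part4 by blast
qed


end
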